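(* Let $z\in\mathcal T_\rightarrow$ and let $z'$ belong to the closure of $\mathcal T_\leftarrow$ in $X^{(c)}$. Then $[z'\cdot\xi]\ne0$ for all $\xi$ in the support of $\gamma(z)$.
   Context: $[z\cdot z']=z_0z'_0-z_1z'_1-z_2z'_2$ on $\mathbb C^3$, $z^2=[z\cdot z]$; $X^{(c)}=\{z\in\mathbb C^3:z^2=-1\}$, $z=x+iy$; $G=SO_0(1,2)$; $V^+=\{y:y^2>0,y_0>0\}$; fix $e\in V^+$; $\mathcal T_\rightarrow=\{z\in X^{(c)}:y^2<0,{\rm sgn}\det(e,x,y)=-1\}$, $\mathcal T_\leftarrow$ the same with $+1$. Cycles: for $v>0$ let $z_v=(0,i\sinh v,\cosh v)\in\mathcal T_\rightarrow$; every $z\in\mathcal T_\rightarrow$ can be written $z=gz_v$ with $g\in G$, $v>0$. With $\xi(\Phi)=(1,\sin\Phi,\cos\Phi)$, $\gamma(z_v)$ is the path $\phi\mapsto\xi(\phi+iv)$, $\phi$ from $-\pi/2$ to $\pi/2$, and $\gamma(z)=g\gamma(z_v)$ (for any such representation $z=gz_v$). *)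

theory Defs
  imports "HOL-Analysis.Analysis"
begin

text \<open>Coordinates: z0, z1, z2 of the paper are z$1, z$2, z$3 of a vector in complex^3.\<close>

definition mink :: "complex^3 \<Rightarrow> complex^3 \<Rightarrow> complex" where
  "mink z w = z$1 * w$1 - z$2 * w$2 - z$3 * w$3"

definition minkR :: "real^3 \<Rightarrow> real^3 \<Rightarrow> real" where
  "minkR x y = x$1 * y$1 - x$2 * y$2 - x$3 * y$3"

definition Xc :: "(complex^3) set" where
  "Xc = {z. mink z z = -1}"

definition re3 :: "complex^3 \<Rightarrow> real^3" where
  "re3 z = (\<chi> i. Re (z$i))"

definition im3 :: "complex^3 \<Rightarrow> real^3" where
  "im3 z = (\<chi> i. Im (z$i))"

definition Vplus :: "(real^3) set" where
  "Vplus = {y. minkR y y > 0 \<and> y$1 > 0}"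

definition det3 :: "real^3 \<Rightarrow> real^3 \<Rightarrow> real^3 \<Rightarrow> real" where
  "det3 a b c = det (transpose (vector [a, b, c] :: real^3^3))"

definition Tright :: "real^3 \<Rightarrow> (complex^3) set" where
  "Tright e = {z \<in> Xc. minkR (im3 z) (im3 z) < 0 \<and> sgn (det3 e (re3 z) (im3 z)) = -1}"

definition Tleft :: "real^3 \<Rightarrow> (complex^3) set" where
  "Tleft e = {z \<in> Xc. minkR (im3 z) (im3 z) < 0 \<and> sgn (det3 e (re3 z) (im3 z)) = 1}"

definition SO012 :: "(real^3^3) set" where
  "SO012 = {g. det g = 1 \<and> (\<forall>x y. minkR (g *v x) (g *v y) = minkR x y) \<and> g$1$1 > 0}"

definition act :: "real^3^3 \<Rightarrow> complex^3 \<Rightarrow> complex^3" where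
  "act g z = (\<chi> i. \<Sum>j\<in>UNIV. complex_of_real (g$i$j) * z$j)"

definition zv :: "real \<Rightarrow> complex^3" where
  "zv v = vector [0, \<i> * complex_of_real (sinh v), complex_of_real (cosh v)]"

definition xi :: "complex \<Rightarrow> complex^3" where
  "xi \<Phi> = vector [1, sin \<Phi>, cos \<Phi>]"

end

theory Submission imports Defs begin

lemma det3_expand: "det3 a b c = a$1*(b$2*c$3 - b$3*c$2) - a$2*(b$1*c$3 - b$3*c$1) + a$3*(b$1*c$2 - b$2*c$1)"
  unfolding det3_def det_3 by (simp add: transpose_def algebra_simps)

lemma mink_split: "mink p q = Complex (minkR (re3 p) (re3 q) - minkR (im3 p) (im3 q)) (minkR (re3 p) (im3 q) + minkR (im3 p) (re3 q))"
  by (simp add: complex_eq_iff mink_def minkR_def re3_def im3_def algebra_simps)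

lemma re3_act: "re3 (act g z) = g *v re3 z" and im3_act: "im3 (act g z) = g *v im3 z"
  by (simp_all add: vec_eq_iff re3_def im3_def act_def matrix_vector_mult_def sum_3)

lemma minkR_mv: "minkR ((g::real^3^3) *v x) y = (g$1$1*x$1+g$1$2*x$2+g$1$3*x$3)*y$1 - (g$2$1*x$1+g$2$2*x$2+g$2$3*x$3)*y$2 - (g$3$1*x$1+g$3$2*x$2+g$3$3*x$3)*y$3"
  by (simp add: minkR_def matrix_vector_mult_def sum_3)

lemma det3_mv: "det3 (g *v a) (g *v b) (g *v c) = det g * det3 a b c"
  unfolding det3_expand det_3 by (simp add: matrix_vector_mult_def sum_3 algebra_simps)

lemma key_real:
  fixes x0 x1 x2 y0 y1 y2 sh ch :: real
  assumes "ch * ch - sh * sh = 1" "sh > 0" "ch > 0"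
    "x0 = ch * x2 - sh * y1" "y0 = ch * y2 + sh * x1"
    "x0 * x0 - x1 * x1 - x2 * x2 - (y0 * y0 - y1 * y1 - y2 * y2) = -1"
    "x0 * y0 - x1 * y1 - x2 * y2 = 0"
    "y0 * y0 - y1 * y1 - y2 * y2 \<le> 0" "x1 * y2 - x2 * y1 \<ge> 0"
  shows False
proof -
  define A where "A = sh * x2 - ch * y1"
  define B where "B = sh * y2 + ch * x1"
  have cc: "ch * ch = 1 + sh * sh" using assms(1) by simp
  have i1: "A * A - B * B = (x0 * x0 - x1 * x1 - x2 * x2 - (y0 * y0 - y1 * y1 - y2 * y2))
      - (ch * ch - sh * sh - 1) * (x1 * x1 + x2 * x2 - y1 * y1 - y2 * y2)"
    unfolding A_def B_def assms(4,5) by algebra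
  have h1: "A * A - B * B = -1" using i1 assms(1,6) by simp
  have i2: "A * B = (x0 * y0 - x1 * y1 - x2 * y2) - (ch * ch - sh * sh - 1) * (x1 * y1 + x2 * y2)"
    unfolding A_def B_def assms(4,5) by algebra
  have h2: "A * B = 0" using i2 assms(1,7) by simp
  have "B \<noteq> 0"
  proof
    assume "B = 0"
    then have "A * A = -1" using h1 by simp
    moreover have "A * A \<ge> 0" by simp
    ultimately show False by simp
  qed
  then have A0: "A = 0" using h2 by simp
  have B1: "B * B = 1" using h1 A0 by simp
  have n: "ch * (x1 * y2 - x2 * y1) = B * y2 - sh * (x2 * x2 + y2 * y2) + A * x2"
    unfolding A_def B_def by algebra
  have e1: "ch * x1 = B - sh * y2" unfolding B_def by simp
  have e2: "ch * y1 = sh * x2 - A" unfolding A_def by simp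
  have "ch * ch * (y0 * y0 - y1 * y1 - y2 * y2) = (ch * ch * y2 + sh * (ch * x1))^2 - (ch * y1)^2 - ch * ch * y2^2"
    unfolding assms(5) by algebra
  also have "\<dots> = ((1 + sh * sh) * y2 + sh * (B - sh * y2))^2 - (sh * x2 - A)^2 - (1 + sh * sh) * y2^2"
    unfolding cc e1 e2 ..
  also have "\<dots> = sh * (sh * B * B + 2 * B * y2 - sh * (x2 * x2 + y2 * y2)) + A * (2 * sh * x2 - A)"
    by algebra
  finally have y: "ch * ch * (y0 * y0 - y1 * y1 - y2 * y2) = sh * (sh * B * B + 2 * B * y2 - sh * (x2 * x2 + y2 * y2)) + A * (2 * sh * x2 - A)" .
  have "ch * (x1 * y2 - x2 * y1) \<ge> 0" using assms(3,9) by simp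
  then have c1: "B * y2 - sh * (x2 * x2 + y2 * y2) \<ge> 0" using n A0 by simp
  have "sh * (sh * B * B + 2 * B * y2 - sh * (x2 * x2 + y2 * y2)) \<le> 0"
  proof -
    have "ch * ch * (y0 * y0 - y1 * y1 - y2 * y2) \<le> 0"
      using assms(3,8) by (simp add: mult_nonneg_nonpos)
    then show ?thesis using y A0 by simp
  qed
  then have c2: "sh * B * B + 2 * B * y2 - sh * (x2 * x2 + y2 * y2) \<le> 0"
    using assms(2) by (simp add: mult_le_0_iff)
  have "sh * (x2 * x2 + y2 * y2) \<ge> 0" using assms(2) by simp
  moreover have "sh * B * B = sh" using B1 by (metis mult.assoc mult_1_right)
  ultimately show False using c1 c2 assms(2) by linarith
qed

lemma key_complex:
  fixes w :: "complex^3" and v \<phi> :: real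
  assumes "mink w w = -1" "minkR (im3 w) (im3 w) \<le> 0"
    "(re3 w)$2 * (im3 w)$3 - (re3 w)$3 * (im3 w)$2 \<ge> 0" "v > 0"
  shows "mink w (xi (complex_of_real \<phi> + \<i> * complex_of_real v)) \<noteq> 0"
proof
  assume z: "mink w (xi (complex_of_real \<phi> + \<i> * complex_of_real v)) = 0"
  define x1 where "x1 = Re (w$1)"
  define x2 where "x2 = Re (w$2)"
  define x3 where "x3 = Re (w$3)"
  define y1 where "y1 = Im (w$1)"
  define y2 where "y2 = Im (w$2)"
  define y3 where "y3 = Im (w$3)"
  define c where "c = cos \<phi>"
  define s where "s = sin \<phi>"
  define ch where "ch = cosh v"
  define sh where "sh = sinh v"
  have ch': "(exp v + exp (-v)) / 2 = ch" unfolding ch_def cosh_field_def ..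
  have sh': "(exp v - exp (-v)) / 2 = sh" unfolding sh_def sinh_field_def ..
  have sc: "c * c + s * s = 1" unfolding c_def s_def by (metis sin_cos_squared_add power2_eq_square add.commute)
  have hs: "ch * ch - sh * sh = 1" using cosh_square_eq[of v] unfolding ch_def sh_def by (simp add: power2_eq_square)
  have shp: "sh > 0" unfolding sh_def using assms(4) by simp
  have chp: "ch > 0" unfolding ch_def by simp
  have "Re (mink w (xi (complex_of_real \<phi> + \<i> * complex_of_real v))) =
     x1 - x2 * s * ch + y2 * c * sh - x3 * c * ch - y3 * s * sh"
    by (simp add: mink_def xi_def Re_sin Im_sin Re_cos Im_cos ch' sh' flip: x1_def x2_def x3_def y1_def y2_def y3_def c_def s_def) (simp add: ch'[symmetric] sh'[symmetric] field_simps)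
  then have R: "x1 = ch * (x2 * s + x3 * c) - sh * (y2 * c - y3 * s)" using z by (simp add: algebra_simps)
  have "Im (mink w (xi (complex_of_real \<phi> + \<i> * complex_of_real v))) =
     y1 - x2 * c * sh - y2 * s * ch + x3 * s * sh - y3 * c * ch"
    by (simp add: mink_def xi_def Re_sin Im_sin Re_cos Im_cos ch' sh' flip: x1_def x2_def x3_def y1_def y2_def y3_def c_def s_def) (simp add: ch'[symmetric] sh'[symmetric] field_simps)
  then have I: "y1 = ch * (y2 * s + y3 * c) + sh * (x2 * c - x3 * s)" using z by (simp add: algebra_simps)
  have m1: "x1 * x1 - x2 * x2 - x3 * x3 - (y1 * y1 - y2 * y2 - y3 * y3) = -1"
    using arg_cong[OF assms(1), of Re] by (simp add: mink_def algebra_simps flip: x1_def x2_def x3_def y1_def y2_def y3_def)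
  have m2: "x1 * y1 - x2 * y2 - x3 * y3 = 0"
    using arg_cong[OF assms(1), of Im] by (simp add: mink_def algebra_simps flip: x1_def x2_def x3_def y1_def y2_def y3_def)
  have m3: "y1 * y1 - y2 * y2 - y3 * y3 \<le> 0"
    using assms(2) by (simp add: minkR_def im3_def flip: y1_def y2_def y3_def)
  have m4: "x2 * y3 - x3 * y2 \<ge> 0"
    using assms(3) by (simp add: re3_def im3_def flip: x2_def x3_def y2_def y3_def)
  define X1 where "X1 = x2 * c - x3 * s"
  define X2 where "X2 = x2 * s + x3 * c"
  define Y1 where "Y1 = y2 * c - y3 * s"
  define Y2 where "Y2 = y2 * s + y3 * c"
  have r1: "X1 * X1 + X2 * X2 = (x2 * x2 + x3 * x3) * (c * c + s * s)" unfolding X1_def X2_def by algebra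
  have r2: "Y1 * Y1 + Y2 * Y2 = (y2 * y2 + y3 * y3) * (c * c + s * s)" unfolding Y1_def Y2_def by algebra
  have r3: "X1 * Y1 + X2 * Y2 = (x2 * y2 + x3 * y3) * (c * c + s * s)" unfolding X1_def X2_def Y1_def Y2_def by algebra
  have r4: "X1 * Y2 - X2 * Y1 = (x2 * y3 - x3 * y2) * (c * c + s * s)" unfolding X1_def X2_def Y1_def Y2_def by algebra
  show False
  proof (rule key_real[OF hs shp chp, of x1 X2 Y1 y1 Y2 X1])
    show "x1 = ch * X2 - sh * Y1" using R unfolding X2_def Y1_def .
    show "y1 = ch * Y2 + sh * X1" using I unfolding Y2_def X1_def .
    show "x1 * x1 - X1 * X1 - X2 * X2 - (y1 * y1 - Y1 * Y1 - Y2 * Y2) = -1" using m1 r1 r2 sc by simp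
    show "x1 * y1 - X1 * Y1 - X2 * Y2 = 0" using m2 r3 sc by simp
    show "y1 * y1 - Y1 * Y1 - Y2 * Y2 \<le> 0" using m3 r2 sc by simp
    show "X1 * Y2 - X2 * Y1 \<ge> 0" using m4 r4 sc by simp
  qed
qed


lemma vec_eq_re_im: "re3 a = re3 b \<Longrightarrow> im3 a = im3 b \<Longrightarrow> a = (b::complex^3)"
  by (simp add: vec_eq_iff re3_def im3_def complex_eq_iff)

lemma rev_cs:
  fixes e1 e2 e3 N1 N2 N3 :: real
  assumes "e1 > 0" "e1 * e1 - e2 * e2 - e3 * e3 > 0" "N1 * N1 - N2 * N2 - N3 * N3 > 0"
  shows "\<bar>e2 * N2 + e3 * N3\<bar> < e1 * \<bar>N1\<bar>"
proof -
  have cs: "(e2 * N2 + e3 * N3)^2 \<le> (e2 * e2 + e3 * e3) * (N2 * N2 + N3 * N3)"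
  proof -
    have "(e2 * e2 + e3 * e3) * (N2 * N2 + N3 * N3) - (e2 * N2 + e3 * N3)^2 = (e2 * N3 - e3 * N2)^2"
      by algebra
    then show ?thesis by (smt (verit) zero_le_power2)
  qed
  have a: "0 \<le> e2 * e2 + e3 * e3" "e2 * e2 + e3 * e3 < e1 * e1" using assms(2) by auto
  have b: "0 \<le> N2 * N2 + N3 * N3" "N2 * N2 + N3 * N3 < N1 * N1" using assms(3) by auto
  have "(e2 * e2 + e3 * e3) * (N2 * N2 + N3 * N3) \<le> (e2 * e2 + e3 * e3) * (N1 * N1)"
    using a(1) b(2) by (simp add: mult_left_mono)
  also have "\<dots> < (e1 * e1) * (N1 * N1)"
  proof -
    have "N1 * N1 > 0" using b by linarith
    then show ?thesis using a(2) by (intro mult_strict_right_mono) auto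
  qed
  finally have "(e2 * N2 + e3 * N3)^2 < (e1 * \<bar>N1\<bar>)^2" using cs
    by (simp add: power2_eq_square algebra_simps)
  then have "\<bar>e2 * N2 + e3 * N3\<bar>^2 < (e1 * \<bar>N1\<bar>)^2" by simp
  moreover have "0 \<le> e1 * \<bar>N1\<bar>" using assms(1) by simp
  ultimately show ?thesis by (rule power2_less_imp_less)
qed

lemma det_sign:
  assumes e: "e \<in> Vplus" and a: "a \<in> Vplus"
    and h1: "minkR x x - minkR y y = -1" and h2: "minkR x y = 0" and h3: "minkR y y < 0"
    and d: "det3 e x y > 0"
  shows "det3 a x y > 0"
proof -
  define N1 where "N1 = x$2 * y$3 - x$3 * y$2"
  define N2 where "N2 = x$1 * y$3 - x$3 * y$1"
  define N3 where "N3 = x$2 * y$1 - x$1 * y$2"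
  have de: "\<And>u. det3 u x y = u$1 * N1 - (u$2 * N2 + u$3 * N3)"
    unfolding det3_expand N1_def N2_def N3_def by algebra
  have "N1 * N1 - N2 * N2 - N3 * N3 = minkR x x * minkR y y - minkR x y * minkR x y"
    unfolding minkR_def N1_def N2_def N3_def by algebra
  also have "\<dots> > 0" using h1 h2 h3 by (simp add: mult_neg_neg)
  finally have N: "N1 * N1 - N2 * N2 - N3 * N3 > 0" .
  have ev: "e$1 > 0" "e$1 * e$1 - e$2 * e$2 - e$3 * e$3 > 0" using e by (auto simp: Vplus_def minkR_def)
  have av: "a$1 > 0" "a$1 * a$1 - a$2 * a$2 - a$3 * a$3 > 0" using a by (auto simp: Vplus_def minkR_def)
  have ce: "\<bar>e$2 * N2 + e$3 * N3\<bar> < e$1 * \<bar>N1\<bar>" by (rule rev_cs[OF ev N])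
  have ca: "\<bar>a$2 * N2 + a$3 * N3\<bar> < a$1 * \<bar>N1\<bar>" by (rule rev_cs[OF av N])
  have "N1 > 0"
  proof (rule ccontr)
    assume "\<not> N1 > 0"
    then have "\<bar>N1\<bar> = - N1" by simp
    then have "e$1 * \<bar>N1\<bar> = - (e$1 * N1)" by simp
    moreover have "- (e$2 * N2 + e$3 * N3) \<le> \<bar>e$2 * N2 + e$3 * N3\<bar>" by (rule abs_ge_minus_self)
    ultimately have "e$1 * N1 - (e$2 * N2 + e$3 * N3) < 0" using ce by linarith
    then show False using d de[of e] by simp
  qed
  then have "a$1 * \<bar>N1\<bar> = a$1 * N1" by simp
  moreover have "(a$2 * N2 + a$3 * N3) \<le> \<bar>a$2 * N2 + a$3 * N3\<bar>" by (rule abs_ge_self)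
  ultimately have "a$1 * N1 - (a$2 * N2 + a$3 * N3) > 0" using ca by linarith
  then show ?thesis using de[of a] by simp
qed

theorem proposition18:
  fixes e :: "real^3" and z z' :: "complex^3"
  assumes "e \<in> Vplus"
    and "z \<in> Tright e"
    and "z' \<in> closure (Tleft e)"
  shows "\<forall>g v \<phi>. g \<in> SO012 \<and> v > 0 \<and> z = act g (zv v) \<and> - (pi/2) \<le> \<phi> \<and> \<phi> \<le> pi/2
           \<longrightarrow> mink z' (act g (xi (complex_of_real \<phi> + \<i> * complex_of_real v))) \<noteq> 0"
proof (intro allI impI)
  fix g :: "real^3^3" and v \<phi> :: real
  assume H: "g \<in> SO012 \<and> v > 0 \<and> z = act g (zv v) \<and> - (pi/2) \<le> \<phi> \<and> \<phi> \<le> pi/2"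
  have gdet: "det g = 1" and gpres: "\<And>x y. minkR (g *v x) (g *v y) = minkR x y" and g11: "g$1$1 > 0"
    using H by (auto simp: SO012_def)
  have vpos: "v > 0" using H by simp
  have "invertible g" using gdet by (simp add: invertible_det_nz)
  then obtain h where gh: "g ** h = mat 1" and hg: "h ** g = mat 1" unfolding invertible_def by blast
  have ghv: "\<And>x. g *v (h *v x) = x" by (simp add: matrix_vector_mul_assoc gh)
  have hpres: "\<And>x y. minkR (h *v x) (h *v y) = minkR x y"
    by (metis gpres ghv)
  define e0 :: "real^3" where "e0 = vector [1, 0, 0]"
  define a where "a = g *v e0"
  have aV: "a \<in> Vplus"
  proof -
    have "minkR a a = minkR e0 e0" unfolding a_def by (rule gpres)
    also have "\<dots> = 1" by (simp add: e0_def minkR_def)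
    finally have "minkR a a = 1" .
    moreover have "a$1 = g$1$1" by (simp add: a_def e0_def matrix_vector_mult_def sum_3)
    ultimately show ?thesis using g11 by (simp add: Vplus_def)
  qed
  define S where "S = {u. mink u u = -1 \<and> minkR (im3 u) (im3 u) \<le> 0 \<and> det3 a (re3 u) (im3 u) \<ge> 0}"
  have cS: "closed S"
  proof -
    have "S = {u. u$1 * u$1 - u$2 * u$2 - u$3 * u$3 = -1} \<inter>
       {u. Im (u$1) * Im (u$1) - Im (u$2) * Im (u$2) - Im (u$3) * Im (u$3) \<le> 0} \<inter>
       {u. 0 \<le> a$1*(Re (u$2)*Im (u$3) - Re (u$3)*Im (u$2)) - a$2*(Re (u$1)*Im (u$3) - Re (u$3)*Im (u$1)) + a$3*(Re (u$1)*Im (u$2) - Re (u$2)*Im (u$1))}"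
      unfolding S_def mink_def minkR_def det3_expand re3_def im3_def by auto
    also have "closed \<dots>"
      by (intro closed_Int closed_Collect_eq closed_Collect_le continuous_intros)
    finally show ?thesis .
  qed
  have TS: "Tleft e \<subseteq> S"
  proof
    fix u assume u: "u \<in> Tleft e"
    have m: "mink u u = -1" and y: "minkR (im3 u) (im3 u) < 0" and sg: "sgn (det3 e (re3 u) (im3 u)) = 1"
      using u by (auto simp: Tleft_def Xc_def)
    have dp: "det3 e (re3 u) (im3 u) > 0" using sg by (simp add: sgn_1_pos)
    have r: "minkR (re3 u) (re3 u) - minkR (im3 u) (im3 u) = -1"
      using arg_cong[OF m, of Re] by (simp add: mink_split)
    have i: "minkR (re3 u) (im3 u) = 0"
    proof -
      have "minkR (re3 u) (im3 u) + minkR (im3 u) (re3 u) = 0"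
        using arg_cong[OF m, of Im] by (simp add: mink_split)
      moreover have "minkR (im3 u) (re3 u) = minkR (re3 u) (im3 u)" by (simp add: minkR_def mult.commute)
      ultimately show ?thesis by simp
    qed
    have "det3 a (re3 u) (im3 u) > 0" by (rule det_sign[OF assms(1) aV r i y dp])
    then show "u \<in> S" using m y by (simp add: S_def)
  qed
  have zS: "z' \<in> S" using closure_minimal[OF TS cS] assms(3) by blast
  define w where "w = act h z'"
  have gw: "act g w = z'" unfolding w_def
    by (rule vec_eq_re_im) (simp_all add: re3_act im3_act ghv)
  have presc: "\<And>p q. mink (act g p) (act g q) = mink p q"
    by (simp add: mink_split re3_act im3_act gpres)
  have w1: "mink w w = -1" using zS presc[of w w] gw by (simp add: S_def)
  have w2: "minkR (im3 w) (im3 w) \<le> 0" using zS unfolding S_def w_def im3_act hpres by simp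
  have "(re3 w)$2 * (im3 w)$3 - (re3 w)$3 * (im3 w)$2 = det3 e0 (re3 w) (im3 w)"
    by (simp add: det3_expand e0_def)
  also have "\<dots> = det3 a (re3 z') (im3 z')"
    using det3_mv[of g e0 "re3 w" "im3 w"] gdet gw unfolding a_def
    by (metis re3_act im3_act mult_1)
  also have "\<dots> \<ge> 0" using zS by (simp add: S_def)
  finally have w3: "(re3 w)$2 * (im3 w)$3 - (re3 w)$3 * (im3 w)$2 \<ge> 0" .
  have "mink z' (act g (xi (complex_of_real \<phi> + \<i> * complex_of_real v))) = mink w (xi (complex_of_real \<phi> + \<i> * complex_of_real v))"
    using presc gw by metis
  then show "mink z' (act g (xi (complex_of_real \<phi> + \<i> * complex_of_real v))) \<noteq> 0"
    using key_complex[OF w1 w2 w3 vpos] by simp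
qed

end
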